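(* Let $M$ be a loopless matroid on ground set $S$ and consider a standard coloring of $M$. Let $Z\subseteq S$ be a subset such that exactly $r_M(Z)$ colors appear in $Z$. Then the coloring restricted to $Z$ is a standard coloring of $M|Z$.
   Context: A coloring is a partition of the ground set into nonempty color classes. A coloring of a rank-$r$ matroid $N$ with color classes $S_1,\dots,S_r$ (so exactly $r$ colors) is standard if, after possibly reindexing the classes, $S_i$ is a cut of the restriction $N|(S_1\cup\dots\cup S_i)$ for every $i=1,\dots,r$, where a cut is an inclusionwise minimal subset of the ground set intersecting every basis. *)

theory Defs
  imports Main "HOL-Library.Disjoint_Sets"
begin

definition matroid :: "'a set \<Rightarrow> ('a set \<Rightarrow> bool) \<Rightarrow> bool" where
  "matroid S indep \<longleftrightarrow> finite S \<and> indep {}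
     \<and> (\<forall>I. indep I \<longrightarrow> I \<subseteq> S)
     \<and> (\<forall>I J. indep J \<and> I \<subseteq> J \<longrightarrow> indep I)
     \<and> (\<forall>I J. indep I \<and> indep J \<and> card I < card J \<longrightarrow> (\<exists>x\<in>J - I. indep (insert x I)))"

definition basis :: "('a set \<Rightarrow> bool) \<Rightarrow> 'a set \<Rightarrow> bool" where
  "basis indep B \<longleftrightarrow> indep B \<and> (\<forall>I. indep I \<and> B \<subseteq> I \<longrightarrow> I = B)"

definition rk :: "('a set \<Rightarrow> bool) \<Rightarrow> 'a set \<Rightarrow> nat" where
  "rk indep X = Max (card ` {I. I \<subseteq> X \<and> indep I})"

definition restr :: "('a set \<Rightarrow> bool) \<Rightarrow> 'a set \<Rightarrow> 'a set \<Rightarrow> bool" where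
  "restr indep X = (\<lambda>I. indep I \<and> I \<subseteq> X)"

definition loopless :: "'a set \<Rightarrow> ('a set \<Rightarrow> bool) \<Rightarrow> bool" where
  "loopless S indep \<longleftrightarrow> (\<forall>x\<in>S. indep {x})"

definition meets_all_bases :: "('a set \<Rightarrow> bool) \<Rightarrow> 'a set \<Rightarrow> bool" where
  "meets_all_bases indep C \<longleftrightarrow> (\<forall>B. basis indep B \<longrightarrow> C \<inter> B \<noteq> {})"

definition is_cut :: "'a set \<Rightarrow> ('a set \<Rightarrow> bool) \<Rightarrow> 'a set \<Rightarrow> bool" where
  "is_cut S indep C \<longleftrightarrow> C \<subseteq> S \<and> meets_all_bases indep C
     \<and> (\<forall>C'. C' \<subset> C \<longrightarrow> \<not> meets_all_bases indep C')"

definition standard_coloring :: "'a set \<Rightarrow> ('a set \<Rightarrow> bool) \<Rightarrow> 'a set set \<Rightarrow> bool" where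
  "standard_coloring S indep P \<longleftrightarrow> partition_on S P \<and>
     (\<exists>\<sigma>. bij_betw \<sigma> {1..rk indep S} P \<and>
        (\<forall>i\<in>{1..rk indep S}.
           is_cut (\<Union>(\<sigma> ` {1..i})) (restr indep (\<Union>(\<sigma> ` {1..i}))) (\<sigma> i)))"

definition restrict_coloring :: "'a set set \<Rightarrow> 'a set \<Rightarrow> 'a set set" where
  "restrict_coloring P Z = {C \<inter> Z | C. C \<in> P \<and> C \<inter> Z \<noteq> {}}"

end

theory Submission
  imports Defs
begin

lemma m_fin: "matroid S indep \<Longrightarrow> finite S" by (simp add: matroid_def)
lemma m_sub: "matroid S indep \<Longrightarrow> indep I \<Longrightarrow> I \<subseteq> S" by (simp add: matroid_def)
lemma m_down: "matroid S indep \<Longrightarrow> indep J \<Longrightarrow> I \<subseteq> J \<Longrightarrow> indep I"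
  unfolding matroid_def by blast
lemma m_empty: "matroid S indep \<Longrightarrow> indep {}" by (simp add: matroid_def)
lemma m_aug: "matroid S indep \<Longrightarrow> indep I \<Longrightarrow> indep J \<Longrightarrow> card I < card J
   \<Longrightarrow> \<exists>x\<in>J - I. indep (insert x I)"
  unfolding matroid_def by blast

lemma rk_fin: assumes "matroid S indep" "X \<subseteq> S"
  shows "finite {I. I \<subseteq> X \<and> indep I}"
proof -
  have "{I. I \<subseteq> X \<and> indep I} \<subseteq> Pow S" using assms by auto
  thus ?thesis using m_fin[OF assms(1)] finite_subset by blast
qed

lemma rk_le: assumes "matroid S indep" "X \<subseteq> S" "indep I" "I \<subseteq> X"
  shows "card I \<le> rk indep X"
  unfolding rk_def using rk_fin[OF assms(1,2)] assms(3,4) by (auto intro!: Max_ge)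

lemma rk_ex: assumes "matroid S indep" "X \<subseteq> S"
  shows "\<exists>I. I \<subseteq> X \<and> indep I \<and> card I = rk indep X"
proof -
  have ne: "card ` {I. I \<subseteq> X \<and> indep I} \<noteq> {}" using m_empty[OF assms(1)] by blast
  have "rk indep X \<in> card ` {I. I \<subseteq> X \<and> indep I}"
    unfolding rk_def using rk_fin[OF assms] ne by (intro Max_in) auto
  thus ?thesis by auto
qed

lemma rk_mono: assumes "matroid S indep" "X \<subseteq> Y" "Y \<subseteq> S"
  shows "rk indep X \<le> rk indep Y"
proof -
  obtain I where "I \<subseteq> X" "indep I" "card I = rk indep X" using rk_ex[OF assms(1)] assms by blast
  thus ?thesis using rk_le[OF assms(1,3), of I] assms(2) by auto
qed

lemma rk_empty: assumes "matroid S indep" shows "rk indep {} = 0"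
  using rk_ex[OF assms, of "{}"] by auto

lemma rk_extend: assumes M: "matroid S indep" and X: "X \<subseteq> S"
  shows "indep I \<Longrightarrow> I \<subseteq> X \<Longrightarrow> \<exists>J. I \<subseteq> J \<and> J \<subseteq> X \<and> indep J \<and> card J = rk indep X"
proof (induction "rk indep X - card I" arbitrary: I rule: less_induct)
  case less
  have le: "card I \<le> rk indep X" using rk_le[OF M X less(2,3)] .
  show ?case
  proof (cases "card I = rk indep X")
    case True thus ?thesis using less by blast
  next
    case False
    obtain K where K: "K \<subseteq> X" "indep K" "card K = rk indep X" using rk_ex[OF M X] by blast
    have "card I < card K" using le False K by auto
    then obtain y where y: "y \<in> K - I" "indep (insert y I)" using m_aug[OF M less(2) K(2)] by blast
    have fI: "finite I" using m_sub[OF M less(2)] m_fin[OF M] finite_subset by blast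
    have c: "card (insert y I) = Suc (card I)" using y fI by auto
    have "insert y I \<subseteq> X" using y K less(3) by auto
    then obtain J where "insert y I \<subseteq> J \<and> J \<subseteq> X \<and> indep J \<and> card J = rk indep X"
      using less(1)[of "insert y I"] c y le False by fastforce
    thus ?thesis by blast
  qed
qed

lemma rk_closure_mono:
  assumes M: "matroid S indep" and AB: "A \<subseteq> B" "B \<subseteq> S" and x: "x \<in> S"
    and gt: "rk indep B < rk indep (insert x B)"
  shows "rk indep A < rk indep (insert x A)"
proof -
  have A: "A \<subseteq> S" using AB by auto
  obtain I where I: "I \<subseteq> A" "indep I" "card I = rk indep A" using rk_ex[OF M A] by blast
  obtain J where J: "I \<subseteq> J" "J \<subseteq> B" "indep J" "card J = rk indep B"
    using rk_extend[OF M AB(2) I(2)] I(1) AB by blast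
  have xB: "insert x B \<subseteq> S" using AB x by auto
  obtain K where K: "K \<subseteq> insert x B" "indep K" "card K = rk indep (insert x B)"
    using rk_ex[OF M xB] by blast
  have "card J < card K" using J K gt by simp
  then obtain y where y: "y \<in> K - J" "indep (insert y J)" using m_aug[OF M J(3) K(2)] by blast
  have "J \<subseteq> S" using J(2) AB(2) by blast
  hence fJ: "finite J" using finite_subset m_fin[OF M] by blast
  have "y = x"
  proof (rule ccontr)
    assume "y \<noteq> x"
    hence "insert y J \<subseteq> B" using y K(1) J(2) by blast
    hence "card (insert y J) \<le> rk indep B" using rk_le[OF M AB(2) y(2)] by blast
    moreover have "card (insert y J) = Suc (card J)" using y fJ by simp
    ultimately show False using J(4) by simp
  qed
  hence xJ: "indep (insert x J)" using y by simp
  have xI: "indep (insert x I)" using m_down[OF M xJ] J by blast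
  have "x \<notin> B" using gt insert_absorb by fastforce
  hence "x \<notin> I" using I(1) AB(1) by blast
  have "I \<subseteq> S" using I(1) A by blast
  hence fI: "finite I" using finite_subset m_fin[OF M] by blast
  have xA: "insert x A \<subseteq> S" using A x by blast
  have "insert x I \<subseteq> insert x A" using I(1) by blast
  hence "card (insert x I) \<le> rk indep (insert x A)"
    using rk_le[OF M xA xI] by blast
  moreover have "card (insert x I) = Suc (card I)" using \<open>x \<notin> I\<close> fI by simp
  ultimately show ?thesis using I(3) by simp
qed

lemma basis_restr: assumes M: "matroid S indep" and X: "X \<subseteq> S"
  shows "basis (restr indep X) B \<longleftrightarrow> B \<subseteq> X \<and> indep B \<and> card B = rk indep X"
proof
  assume b: "basis (restr indep X) B"
  hence B: "B \<subseteq> X" "indep B" unfolding basis_def restr_def by auto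
  obtain J where J: "B \<subseteq> J" "J \<subseteq> X" "indep J" "card J = rk indep X"
    using rk_extend[OF M X B(2) B(1)] by blast
  have "J = B" using b J unfolding basis_def restr_def by auto
  thus "B \<subseteq> X \<and> indep B \<and> card B = rk indep X" using B J by auto
next
  assume B: "B \<subseteq> X \<and> indep B \<and> card B = rk indep X"
  show "basis (restr indep X) B" unfolding basis_def restr_def
  proof (intro conjI allI impI)
    fix I assume I: "(indep I \<and> I \<subseteq> X) \<and> B \<subseteq> I"
    have "I \<subseteq> S" using I X by blast
    hence "finite I" using finite_subset m_fin[OF M] by blast
    moreover have "card I \<le> card B" using rk_le[OF M X, of I] I B by auto
    ultimately show "I = B" using I card_seteq by blast
  qed (use B in auto)
qed

lemma meets_restr: assumes M: "matroid S indep" and X: "X \<subseteq> S"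
  shows "meets_all_bases (restr indep X) C \<longleftrightarrow> rk indep (X - C) < rk indep X"
proof
  assume m: "meets_all_bases (restr indep X) C"
  show "rk indep (X - C) < rk indep X"
  proof (rule ccontr)
    assume "\<not> ?thesis"
    moreover have "rk indep (X - C) \<le> rk indep X" using rk_mono[OF M _ X, of "X - C"] by blast
    ultimately have eq: "rk indep (X - C) = rk indep X" by linarith
    obtain I where I: "I \<subseteq> X - C" "indep I" "card I = rk indep (X - C)"
      using rk_ex[OF M, of "X - C"] X by blast
    have "basis (restr indep X) I" using iffD2[OF basis_restr[OF M X]] I eq by auto
    hence "C \<inter> I \<noteq> {}" using m unfolding meets_all_bases_def by blast
    thus False using I(1) by blast
  qed
next
  assume lt: "rk indep (X - C) < rk indep X"
  show "meets_all_bases (restr indep X) C" unfolding meets_all_bases_def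
  proof (intro allI impI)
    fix B assume "basis (restr indep X) B"
    hence B: "B \<subseteq> X" "indep B" "card B = rk indep X" using iffD1[OF basis_restr[OF M X]] by auto
    show "C \<inter> B \<noteq> {}"
    proof
      assume "C \<inter> B = {}"
      hence "B \<subseteq> X - C" using B by auto
      moreover have "X - C \<subseteq> S" using X by blast
      ultimately have "card B \<le> rk indep (X - C)" using rk_le[OF M _ B(2)] by blast
      thus False using lt B by auto
    qed
  qed
qed

lemma cut_iff: assumes M: "matroid S indep" and X: "X \<subseteq> S"
  shows "is_cut X (restr indep X) C \<longleftrightarrow> C \<subseteq> X \<and> rk indep (X - C) < rk indep X
     \<and> (\<forall>C'. C' \<subset> C \<longrightarrow> rk indep X \<le> rk indep (X - C'))"
proof -
  have "\<And>D. meets_all_bases (restr indep X) D = (rk indep (X - D) < rk indep X)"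
    using meets_restr[OF M X] by blast
  thus ?thesis unfolding is_cut_def by (metis not_less)
qed

lemma nat_count:
  fixes g :: "nat \<Rightarrow> nat"
  assumes "\<And>j. j \<in> {1..k} \<Longrightarrow> g (j - 1) < g j" "g 0 = 0" "g k = k" "j \<le> k"
  shows "g j = j"
proof -
  have *: "a \<le> b \<Longrightarrow> b \<le> k \<Longrightarrow> g a + (b - a) \<le> g b" for a b
  proof (induction b arbitrary: a)
    case 0 thus ?case by auto
  next
    case (Suc b)
    show ?case
    proof (cases "a = Suc b")
      case False
      hence "g a + (b - a) \<le> g b" using Suc by auto
      moreover have "g b < g (Suc b)" using assms(1)[of "Suc b"] Suc by auto
      moreover have "a \<le> b" using False Suc.prems by auto
      ultimately show ?thesis by arith
    qed auto
  qed
  show ?thesis using *[of 0 j] *[of j k] assms by auto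
qed


theorem lemma14:
  fixes S :: "'a set" and indep :: "'a set \<Rightarrow> bool" and P :: "'a set set" and Z :: "'a set"
  assumes "matroid S indep"
    and "loopless S indep"
    and "standard_coloring S indep P"
    and "Z \<subseteq> S"
    and "card {C \<in> P. C \<inter> Z \<noteq> {}} = rk indep Z"
  shows "standard_coloring Z (restr indep Z) (restrict_coloring P Z)"
proof -
  note M = assms(1)
  define r where "r = rk indep S"
  define k where "k = rk indep Z"
  have part: "partition_on S P" and "\<exists>\<sigma>. bij_betw \<sigma> {1..r} P \<and>
        (\<forall>i\<in>{1..r}. is_cut (\<Union>(\<sigma> ` {1..i})) (restr indep (\<Union>(\<sigma> ` {1..i}))) (\<sigma> i))"
    using assms(3) unfolding standard_coloring_def r_def by auto
  then obtain \<sigma> where bij: "bij_betw \<sigma> {1..r} P" and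
    cut: "\<And>i. i\<in>{1..r} \<Longrightarrow> is_cut (\<Union>(\<sigma> ` {1..i})) (restr indep (\<Union>(\<sigma> ` {1..i}))) (\<sigma> i)"
    by blast
  define T where "T i = \<Union>(\<sigma> ` {1..i})" for i
  have PS: "\<Union>P = S" and Pne: "{} \<notin> P" and Pdisj: "\<And>A B. A \<in> P \<Longrightarrow> B \<in> P \<Longrightarrow> A \<noteq> B \<Longrightarrow> A \<inter> B = {}"
    using part unfolding partition_on_def disjoint_def by auto
  have sigP: "\<And>i. i \<in> {1..r} \<Longrightarrow> \<sigma> i \<in> P" using bij bij_betwE by blast
  have siginj: "\<And>i j. i \<in> {1..r} \<Longrightarrow> j \<in> {1..r} \<Longrightarrow> \<sigma> i = \<sigma> j \<Longrightarrow> i = j"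
    using bij unfolding bij_betw_def inj_on_def by blast
  have sigdisj: "\<And>i j. i \<in> {1..r} \<Longrightarrow> j \<in> {1..r} \<Longrightarrow> i \<noteq> j \<Longrightarrow> \<sigma> i \<inter> \<sigma> j = {}"
    using sigP siginj Pdisj by metis
  have sigS: "\<And>i. i \<in> {1..r} \<Longrightarrow> \<sigma> i \<subseteq> S" using sigP PS by blast
  have TS: "\<And>i. i \<le> r \<Longrightarrow> T i \<subseteq> S" unfolding T_def using sigS by fastforce
  have Tstep: "\<And>i. i \<in> {1..r} \<Longrightarrow> T i - \<sigma> i = T (i - 1)"
  proof -
    fix i assume i: "i \<in> {1..r}"
    have "{1..i} = insert i {1..i-1}" using i by auto
    hence "T i = \<sigma> i \<union> T (i - 1)" unfolding T_def by auto
    moreover have "\<sigma> i \<inter> T (i - 1) = {}" unfolding T_def using sigdisj i by fastforce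
    ultimately show "T i - \<sigma> i = T (i - 1)" by blast
  qed
  define J where "J = {i\<in>{1..r}. \<sigma> i \<inter> Z \<noteq> {}}"
  have finJ: "finite J" unfolding J_def by auto
  have "\<sigma> ` J = {C \<in> P. C \<inter> Z \<noteq> {}}"
  proof
    show "\<sigma> ` J \<subseteq> {C \<in> P. C \<inter> Z \<noteq> {}}" unfolding J_def using sigP by auto
    show "{C \<in> P. C \<inter> Z \<noteq> {}} \<subseteq> \<sigma> ` J"
    proof
      fix C assume C: "C \<in> {C \<in> P. C \<inter> Z \<noteq> {}}"
      then obtain i where "i \<in> {1..r}" "C = \<sigma> i" using bij unfolding bij_betw_def by blast
      thus "C \<in> \<sigma> ` J" unfolding J_def using C by auto
    qed
  qed
  moreover have "inj_on \<sigma> J" unfolding J_def using siginj by (auto simp: inj_on_def)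
  ultimately have cardJ: "card J = k" using assms(5) card_image k_def by metis
  define L where "L = sorted_list_of_set J"
  have setL: "set L = J" unfolding L_def using finJ by simp
  have lenL: "length L = k" unfolding L_def using cardJ by simp
  have sortL: "sorted_wrt (<) L" unfolding L_def by (simp add: strict_sorted_list_of_set)
  define f where "f j = L ! (j - 1)" for j
  have fJ: "\<And>j. j \<in> {1..k} \<Longrightarrow> f j \<in> J" unfolding f_def using setL lenL by auto
  have fmono: "\<And>a b. a \<in> {1..k} \<Longrightarrow> b \<in> {1..k} \<Longrightarrow> a < b \<Longrightarrow> f a < f b"
    unfolding f_def using sortL lenL sorted_wrt_nth_less[of "(<)" L] by auto
  have fsurj: "\<And>i. i \<in> J \<Longrightarrow> \<exists>j\<in>{1..k}. f j = i"
  proof -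
    fix i assume "i \<in> J"
    then obtain n where "n < length L" "L ! n = i" using setL by (metis in_set_conv_nth)
    thus "\<exists>j\<in>{1..k}. f j = i" unfolding f_def using lenL by (intro bexI[of _ "Suc n"]) auto
  qed
  have finj: "\<And>a b. a \<in> {1..k} \<Longrightarrow> b \<in> {1..k} \<Longrightarrow> f a = f b \<Longrightarrow> a = b"
    using fmono by (metis less_irrefl nat_neq_iff)
  have fr: "\<And>j. j \<in> {1..k} \<Longrightarrow> f j \<in> {1..r}" using fJ unfolding J_def by auto
  define \<tau> where "\<tau> j = \<sigma> (f j) \<inter> Z" for j
  define U where "U j = \<Union>(\<tau> ` {1..j})" for j
  have tne: "\<And>j. j \<in> {1..k} \<Longrightarrow> \<tau> j \<noteq> {}" using fJ unfolding J_def \<tau>_def by auto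
  have tdisj: "\<And>a b. a \<in> {1..k} \<Longrightarrow> b \<in> {1..k} \<Longrightarrow> a \<noteq> b \<Longrightarrow> \<tau> a \<inter> \<tau> b = {}"
    unfolding \<tau>_def using finj fr sigdisj by blast
  have UZ: "\<And>j. U j \<subseteq> Z" unfolding U_def \<tau>_def by auto
  have US: "\<And>j. U j \<subseteq> S" using UZ assms(4) by blast
  have Ustep: "\<And>j. j \<in> {1..k} \<Longrightarrow> U j - \<tau> j = U (j - 1)"
  proof -
    fix j assume j: "j \<in> {1..k}"
    have "{1..j} = insert j {1..j-1}" using j by auto
    hence "U j = \<tau> j \<union> U (j - 1)" unfolding U_def by auto
    moreover have "\<tau> j \<inter> U (j - 1) = {}" unfolding U_def using tdisj j by fastforce
    ultimately show "U j - \<tau> j = U (j - 1)" by blast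
  qed
  have tU0: "\<And>j. j \<in> {1..k} \<Longrightarrow> \<tau> j \<subseteq> U j" unfolding U_def by auto
  have Uins: "\<And>j x. j \<in> {1..k} \<Longrightarrow> x \<in> \<tau> j \<Longrightarrow> insert x (U (j - 1)) \<subseteq> U j"
  proof -
    fix j x assume j: "j \<in> {1..k}" and x: "x \<in> \<tau> j"
    have "U (j - 1) \<subseteq> U j" using Ustep[OF j] by (metis Diff_subset)
    thus "insert x (U (j - 1)) \<subseteq> U j" using tU0[OF j] x by blast
  qed
  have UT: "\<And>j. j \<in> {1..k} \<Longrightarrow> U (j - 1) \<subseteq> T (f j - 1)"
  proof -
    fix j assume j: "j \<in> {1..k}"
    show "U (j - 1) \<subseteq> T (f j - 1)"
    proof
      fix y assume "y \<in> U (j - 1)"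
      then obtain j' where j': "j' \<in> {1..j-1}" "y \<in> \<tau> j'" unfolding U_def by auto
      have "f j' < f j" using fmono[of j' j] j j' by auto
      hence "f j' \<in> {1..f j - 1}" using fr[of j'] j j' by auto
      thus "y \<in> T (f j - 1)" unfolding T_def using j' \<tau>_def by auto
    qed
  qed
  have incr: "\<And>j x. j \<in> {1..k} \<Longrightarrow> x \<in> \<tau> j \<Longrightarrow> rk indep (U (j - 1)) < rk indep (insert x (U (j - 1)))"
  proof -
    fix j x assume j: "j \<in> {1..k}" and x: "x \<in> \<tau> j"
    define i where "i = f j"
    have i: "i \<in> {1..r}" using fr j i_def by auto
    have xi: "x \<in> \<sigma> i" using x i_def \<tau>_def by auto
    have Ti: "T i \<subseteq> S" using TS i by auto
    have c: "is_cut (T i) (restr indep (T i)) (\<sigma> i)" using cut[OF i] unfolding T_def .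
    hence c1: "rk indep (T i - \<sigma> i) < rk indep (T i)"
      and c2: "rk indep (T i) \<le> rk indep (T i - (\<sigma> i - {x}))"
      using cut_iff[OF M Ti] xi by auto
    have sT: "\<sigma> i \<subseteq> T i" unfolding T_def using i by auto
    have "T i - (\<sigma> i - {x}) = insert x (T i - \<sigma> i)" using sT xi by blast
    hence "T i - (\<sigma> i - {x}) = insert x (T (i - 1))" using Tstep[OF i] by simp
    hence "rk indep (T (i - 1)) < rk indep (insert x (T (i - 1)))"
      using c1 c2 Tstep[OF i] by simp
    moreover have "i - 1 \<le> r" using i by auto
    hence "T (i - 1) \<subseteq> S" using TS by blast
    moreover have "x \<in> S" using xi sigS i by auto
    ultimately show "rk indep (U (j - 1)) < rk indep (insert x (U (j - 1)))"
      using rk_closure_mono[OF M UT[OF j]] i_def by auto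
  qed
  have Ult: "\<And>j. j \<in> {1..k} \<Longrightarrow> rk indep (U (j - 1)) < rk indep (U j)"
  proof -
    fix j assume j: "j \<in> {1..k}"
    then obtain x where x: "x \<in> \<tau> j" using tne by blast
    show "rk indep (U (j - 1)) < rk indep (U j)"
      using incr[OF j x] rk_mono[OF M Uins[OF j x] US] by auto
  qed
  have U0: "U 0 = {}" unfolding U_def by auto
  have Uk: "U k = Z"
  proof
    show "U k \<subseteq> Z" using UZ .
    show "Z \<subseteq> U k"
    proof
      fix z assume z: "z \<in> Z"
      then obtain C where C: "C \<in> P" "z \<in> C" using PS assms(4) by blast
      then obtain i where i: "i \<in> {1..r}" "C = \<sigma> i" using bij unfolding bij_betw_def by blast
      hence "i \<in> J" unfolding J_def using C z by auto
      then obtain j where "j \<in> {1..k}" "f j = i" using fsurj by blast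
      thus "z \<in> U k" unfolding U_def \<tau>_def using i C z by auto
    qed
  qed
  have rkU: "\<And>j. j \<le> k \<Longrightarrow> rk indep (U j) = j"
  proof -
    fix j :: nat assume j: "j \<le> k"
    have z: "rk indep (U 0) = 0" using U0 rk_empty[OF M] by simp
    have kk: "rk indep (U k) = k" using Uk k_def by simp
    show "rk indep (U j) = j"
      by (rule nat_count[of k "\<lambda>j. rk indep (U j)", OF Ult z kk j])
  qed
  have restr2: "\<And>j. restr (restr indep Z) (U j) = restr indep (U j)"
    unfolding restr_def using UZ by (auto intro!: ext)
  have rkZ: "rk (restr indep Z) Z = k"
  proof -
    have "{I. I \<subseteq> Z \<and> restr indep Z I} = {I. I \<subseteq> Z \<and> indep I}" unfolding restr_def by blast
    thus ?thesis unfolding rk_def k_def by simp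
  qed
  have Pimg: "restrict_coloring P Z = \<tau> ` {1..k}"
  proof
    show "\<tau> ` {1..k} \<subseteq> restrict_coloring P Z"
      unfolding restrict_coloring_def using tne fr sigP \<tau>_def by fastforce
    show "restrict_coloring P Z \<subseteq> \<tau> ` {1..k}"
    proof
      fix D assume "D \<in> restrict_coloring P Z"
      then obtain C where C: "C \<in> P" "C \<inter> Z \<noteq> {}" "D = C \<inter> Z"
        unfolding restrict_coloring_def by blast
      then obtain i where i: "i \<in> {1..r}" "C = \<sigma> i" using bij unfolding bij_betw_def by blast
      hence "i \<in> J" unfolding J_def using C by auto
      then obtain j where "j \<in> {1..k}" "f j = i" using fsurj by blast
      thus "D \<in> \<tau> ` {1..k}" unfolding \<tau>_def using i C by auto
    qed
  qed
  have tinj: "inj_on \<tau> {1..k}"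
    unfolding inj_on_def using tdisj tne by (metis Int_absorb)
  have bij2: "bij_betw \<tau> {1..k} (restrict_coloring P Z)"
    using tinj Pimg unfolding bij_betw_def by auto
  have part2: "partition_on Z (restrict_coloring P Z)"
    unfolding partition_on_def
  proof (intro conjI)
    show "\<Union> (restrict_coloring P Z) = Z" using Pimg Uk unfolding U_def by simp
    show "disjoint (restrict_coloring P Z)" unfolding disjoint_def Pimg using tdisj by blast
    show "{} \<notin> restrict_coloring P Z" unfolding restrict_coloring_def by auto
  qed
  have cuts: "\<And>j. j \<in> {1..k} \<Longrightarrow> is_cut (U j) (restr indep (U j)) (\<tau> j)"
  proof -
    fix j assume j: "j \<in> {1..k}"
    have tU: "\<tau> j \<subseteq> U j" unfolding U_def using j by auto
    have a: "rk indep (U j - \<tau> j) < rk indep (U j)" using Ustep[OF j] rkU j by auto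
    have b: "rk indep (U j) \<le> rk indep (U j - C')" if C': "C' \<subset> \<tau> j" for C'
    proof -
      obtain x where x: "x \<in> \<tau> j" "x \<notin> C'" using C' by blast
      have sub: "insert x (U (j - 1)) \<subseteq> U j - C'" using Ustep[OF j] x tU C' by blast
      have "rk indep (U j) = j" using rkU j by auto
      also have "j \<le> rk indep (insert x (U (j - 1)))" using incr[OF j x(1)] rkU[of "j-1"] j by auto
      also have "\<dots> \<le> rk indep (U j - C')" using rk_mono[OF M sub] US by blast
      finally show ?thesis .
    qed
    show "is_cut (U j) (restr indep (U j)) (\<tau> j)"
      using cut_iff[OF M US[of j]] tU a b by blast
  qed
  have "\<forall>j\<in>{1..k}. is_cut (\<Union>(\<tau> ` {1..j})) (restr (restr indep Z) (\<Union>(\<tau> ` {1..j}))) (\<tau> j)"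
  proof
    fix j assume "j \<in> {1..k}"
    thus "is_cut (\<Union>(\<tau> ` {1..j})) (restr (restr indep Z) (\<Union>(\<tau> ` {1..j}))) (\<tau> j)"
      using cuts[of j] restr2[of j] unfolding U_def by simp
  qed
  thus ?thesis unfolding standard_coloring_def rkZ using part2 bij2 by blast
qed

end
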